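(* Let $d\ge 1$ and let $f$ be a probability density on $\mathbb{R}^d$ with compact support and a unique global mode $x_0$ (i.e. $\{x_0\}=\arg\max_{x} f(x)$), such that for some constants $0<c_0<C_0$, $h_0>0$ and $\beta>0$: $$f(x_0)-C_0\|x-x_0\|^\beta \le f(x)\le f(x_0)-c_0\|x-x_0\|^\beta \quad\text{whenever } \|x-x_0\|\le h_0,$$ $$f(x)\le f(x_0)-c_0h_0^\beta \quad\text{whenever } \|x-x_0\|\ge h_0.$$ Let $X_1,\dots,X_n$ be i.i.d. with density $f$, let $h>0$ be a bin size, and let $\hat x$ be the output of the Mono-scale Mode Hunting procedure (described in the context) applied to $X_1,\dots,X_n$ with bin size $h$. Then there is a constant $A>0$ depending only on the constants in the two displayed conditions (and on $f$, $d$) such that, for all $n$ and $h>0$, $\|\hat x-x_0\|\le Ah$ with probability at least $1-A\exp(-nh^{d+2\beta}/A)$.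
   Context: Throughout, $\|x\|=\max_i|x_i|$ denotes the sup-norm on $\mathbb{R}^d$. Mono-scale Mode Hunting with bin size $h$: for $k\in\mathbb{Z}^d$, the bin $k$ is the hypercube $[kh,(k+1)h)$ (coordinatewise), and its count is the number of sample points lying in it. For each $i$, let $k_i=\lfloor X_i/h\rfloor$ (coordinatewise floor), let $\hat k$ be a bin index $k_i$ with the largest count (maximizing over $i=1,\dots,n$), and return $\hat x:=\hat k h$. *)

theory Defs
  imports "HOL-Probability.Probability"
begin

definition bin_index :: "real \<Rightarrow> real^'d \<Rightarrow> int^'d" where
  "bin_index h x = (\<chi> i. \<lfloor>x $ i / h\<rfloor>)"

definition bin_count :: "real \<Rightarrow> nat \<Rightarrow> (nat \<Rightarrow> real^'d) \<Rightarrow> int^'d \<Rightarrow> nat" where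
  "bin_count h n X k = card {j \<in> {..<n}. bin_index h (X j) = k}"

definition bin_corner :: "real \<Rightarrow> int^'d \<Rightarrow> real^'d" where
  "bin_corner h k = (\<chi> i. real_of_int (k $ i) * h)"

text \<open>Admissible outputs of Mono-scale Mode Hunting: the points (k_i) h where k_i is a
  sample bin index with the largest count (any tie-breaking).\<close>
definition mode_hunting_outputs :: "real \<Rightarrow> nat \<Rightarrow> (nat \<Rightarrow> real^'d) \<Rightarrow> (real^'d) set" where
  "mode_hunting_outputs h n X =
     {bin_corner h (bin_index h (X i)) | i. i < n \<and>
        (\<forall>j<n. bin_count h n X (bin_index h (X j)) \<le> bin_count h n X (bin_index h (X i)))}"

end

theory Submission
  imports Defs "HOL-Real_Asymp.Real_Asymp"
begin

lemma prod_mgf: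
  fixes M :: "'a measure" and g :: "'a \<Rightarrow> real"
  assumes "prob_space M" "g \<in> borel_measurable M" "\<And>x. g x \<ge> 0"
  shows "(\<integral>\<^sup>+ X. ennreal (\<Prod>j<n. g (X j)) \<partial>PiM {..<n} (\<lambda>_. M)) = (\<integral>\<^sup>+ x. ennreal (g x) \<partial>M) ^ n"
proof -
  interpret product_prob_space "\<lambda>_. M" by (rule product_prob_spaceI) (rule assms(1))
  have "(\<integral>\<^sup>+ X. ennreal (\<Prod>j<n. g (X j)) \<partial>PiM {..<n} (\<lambda>_. M)) =
        (\<integral>\<^sup>+ X. (\<Prod>j<n. ennreal (g (X j))) \<partial>PiM {..<n} (\<lambda>_. M))"
    using assms(3) by (simp add: prod_ennreal)
  also have "\<dots> = (\<Prod>j<n. (\<integral>\<^sup>+ x. ennreal (g x) \<partial>M))"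
    using assms(2) by (intro product_nn_integral_prod) auto
  finally show ?thesis by simp
qed

lemma pair_count_bound:
  fixes M :: "'a measure"
  assumes P: "prob_space M" and B: "B \<in> sets M" and B0: "B0 \<in> sets M" and dj: "B \<inter> B0 = {}"
    and pq: "measure M B < measure M B0"
  shows "measure (PiM {..<n} (\<lambda>_. M))
     {X \<in> space (PiM {..<n} (\<lambda>_. M)). card {j\<in>{..<n}. X j \<in> B0} \<le> card {j\<in>{..<n}. X j \<in> B}}
     \<le> exp (- real n * (measure M B0 - measure M B)^2 / (8 * measure M B0))"
proof -
  interpret prob_space M by (rule P)
  define p where "p = measure M B"
  define q where "q = measure M B0"
  have p0: "p \<ge> 0" unfolding p_def by simp
  have pq': "p < q" using pq unfolding p_def q_def .
  have q0: "q > 0" using p0 pq' by linarith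
  define l where "l = (q - p) / (4 * q)"
  have l0: "l > 0" unfolding l_def using pq' q0 by simp
  have l1: "l \<le> 1" unfolding l_def using p0 q0 by (simp add: field_simps)
  define g where "g x = exp (l * (indicator B x - indicator B0 x))" for x
  have gm: "g \<in> borel_measurable M" unfolding g_def using B B0 by measurable
  have g_eq: "g x = 1 + (exp l - 1) * indicator B x + (exp (-l) - 1) * indicator B0 x" for x
    using dj by (auto simp: g_def indicator_def)
  have intg: "integrable M g"
  proof -
    have "integrable M (\<lambda>x. 1 + (exp l - 1) * indicator B x + (exp (-l) - 1) * indicator B0 x)"
      using B B0 by (simp add: emeasure_eq_measure)
    then show ?thesis by (simp add: g_eq[abs_def])
  qed
  define I where "I = integral\<^sup>L M g"
  have I_eq: "I = 1 + (exp l - 1) * p + (exp (-l) - 1) * q"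
  proof -
    have "I = integral\<^sup>L M (\<lambda>x. 1 + (exp l - 1) * indicator B x + (exp (-l) - 1) * indicator B0 x)"
      unfolding I_def by (simp add: g_eq[abs_def])
    also have "\<dots> = 1 + (exp l - 1) * p + (exp (-l) - 1) * q"
      using B B0 by (simp add: p_def q_def prob_space emeasure_eq_measure)
    finally show ?thesis .
  qed
  have nnI: "(\<integral>\<^sup>+ x. ennreal (g x) \<partial>M) = ennreal I"
    unfolding I_def by (rule nn_integral_eq_integral[OF intg]) (auto simp: g_def)
  have I0: "I \<ge> 0" unfolding I_def by (rule integral_nonneg_AE) (auto simp: g_def)
  have e1: "exp l - 1 \<le> l + l^2" using exp_bound[of l] l0 l1 by simp
  have e2: "exp (-l) - 1 \<le> - l + l^2"
  proof -
    have "exp (-l) = 1 / exp l" by (simp add: exp_minus field_simps)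
    also have "\<dots> \<le> 1 / (1 + l)" using l0 by (intro divide_left_mono) (auto simp: add_pos_pos exp_ge_add_one_self)
    also have "\<dots> \<le> 1 - l + l^2" using l0 by (simp add: field_simps power2_eq_square)
    finally show ?thesis by simp
  qed
  have "I - 1 \<le> p * (l + l^2) + q * (- l + l^2)"
    unfolding I_eq using e1 e2 p0 q0 by (smt (verit) mult_left_mono mult.commute)
  also have "\<dots> \<le> - l * (q - p) + 2 * l^2 * q" using p0 pq' l0
    by (simp add: algebra_simps power2_eq_square)
  also have "\<dots> = - ((q - p)^2) / (8 * q)" unfolding l_def using q0 by (simp add: field_simps power2_eq_square)
  finally have Ib: "I - 1 \<le> - ((q - p)^2) / (8 * q)" .
  let ?P = "PiM {..<n} (\<lambda>_. M)"
  interpret Pp: prob_space ?P by (intro prob_space_PiM) (rule P)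
  define T where "T = {X \<in> space ?P. 1 \<le> (\<Prod>j<n. g (X j))}"
  have prodg: "(\<Prod>j<n. g (X j)) = exp (l * (real (card {j\<in>{..<n}. X j \<in> B}) - real (card {j\<in>{..<n}. X j \<in> B0})))" for X
  proof -
    have c: "(\<Sum>j<n. indicator C (X j)) = real (card {j\<in>{..<n}. X j \<in> C})" for C
    proof -
      have "(\<Sum>j<n. indicator C (X j) :: real) = (\<Sum>j<n. indicator {j. X j \<in> C} j)"
        by (simp add: indicator_def)
      also have "\<dots> = real (card ({..<n} \<inter> {j. X j \<in> C}))"
      proof -
        have "real (card ({..<n} \<inter> {j. X j \<in> C})) = real (\<Sum>j<n. indicator {j. X j \<in> C} j)"
          by (subst sum_indicator_eq_card) auto
        also have "\<dots> = (\<Sum>j<n. real (indicator {j. X j \<in> C} j))" by (rule of_nat_sum)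
        also have "\<dots> = (\<Sum>j<n. indicator {j. X j \<in> C} j)" by (simp add: indicator_def)
        finally show ?thesis by simp
      qed
      finally show ?thesis by (simp add: Int_def)
    qed
    have "(\<Prod>j<n. g (X j)) = exp (\<Sum>j<n. l * (indicator B (X j) - indicator B0 (X j)))"
      by (simp add: g_def exp_sum)
    also have "\<dots> = exp (l * ((\<Sum>j<n. indicator B (X j)) - (\<Sum>j<n. indicator B0 (X j))))"
      by (simp add: sum_distrib_left[symmetric] sum_subtractf)
    finally show ?thesis by (simp add: c)
  qed
  have Seq: "{X \<in> space ?P. card {j\<in>{..<n}. X j \<in> B0} \<le> card {j\<in>{..<n}. X j \<in> B}} = T"
    unfolding T_def prodg using l0 by (auto simp: zero_le_mult_iff)
  have Tm: "T \<in> sets ?P" unfolding T_def using gm by measurable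
  have "emeasure ?P T \<le> (\<integral>\<^sup>+ X. ennreal (\<Prod>j<n. g (X j)) \<partial>?P)"
  proof -
    have "emeasure ?P T = (\<integral>\<^sup>+ X. indicator T X \<partial>?P)" using Tm by simp
    also have "\<dots> \<le> (\<integral>\<^sup>+ X. ennreal (\<Prod>j<n. g (X j)) \<partial>?P)"
      by (intro nn_integral_mono) (auto simp: T_def indicator_def)
    finally show ?thesis .
  qed
  also have "\<dots> = ennreal I ^ n" using prod_mgf[OF P gm] nnI by (simp add: g_def)
  also have "\<dots> = ennreal (I ^ n)" using I0 by (simp add: ennreal_power)
  finally have "measure ?P T \<le> I ^ n" using I0
    by (simp add: Pp.emeasure_eq_measure)
  also have "I ^ n \<le> exp (I - 1) ^ n"
    using I0 by (intro power_mono) (auto simp: exp_ge_add_one_self[of "I-1", simplified] )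
  also have "\<dots> = exp (real n * (I - 1))" by (simp add: exp_of_nat_mult)
  also have "\<dots> \<le> exp (- real n * (q - p)^2 / (8 * q))"
    using mult_left_mono[OF Ib, of "real n"] by simp
  finally show ?thesis unfolding Seq p_def q_def .
qed

lemma infnorm_attained: "\<exists>i. infnorm (x::real^'n) = \<bar>x$i\<bar>"
proof -
  have fin: "finite {\<bar>x$i\<bar> |i. i\<in>UNIV}"
  proof -
    have "{\<bar>x$i\<bar> |i. i\<in>UNIV} = (\<lambda>i. \<bar>x$i\<bar>) ` UNIV" by auto
    then show ?thesis by simp
  qed
  have ne: "{\<bar>x$i\<bar> |i. i\<in>UNIV} \<noteq> {}" by auto
  have "Max {\<bar>x$i\<bar> |i. i\<in>UNIV} \<in> {\<bar>x$i\<bar> |i. i\<in>UNIV}"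
    using fin ne by (rule Max_in)
  then have "Sup {\<bar>x$i\<bar> |i. i\<in>UNIV} \<in> {\<bar>x$i\<bar> |i. i\<in>UNIV}"
    using fin ne by (simp add: cSup_eq_Max)
  then show ?thesis unfolding infnorm_cart by auto
qed

lemma infnorm_le_iff: "infnorm (x::real^'n) \<le> c \<longleftrightarrow> (\<forall>i. \<bar>x$i\<bar> \<le> c)"
  using infnorm_attained[of x] component_le_infnorm_cart[of x] by (metis order_trans)

lemma bin_index_bounds:
  assumes h: "h > 0" and "bin_index h x = k"
  shows "real_of_int (k$i) * h \<le> x$i" "x$i < real_of_int (k$i) * h + h"
proof -
  have "k$i = \<lfloor>x$i / h\<rfloor>" using assms(2) by (auto simp: bin_index_def)
  then have "real_of_int (k$i) \<le> x$i / h" "x$i / h < real_of_int (k$i) + 1"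
    by linarith+
  then show "real_of_int (k$i) * h \<le> x$i" "x$i < real_of_int (k$i) * h + h"
    using h by (simp_all add: field_simps)
qed

lemma bin_index_iff:
  assumes h: "h > 0"
  shows "bin_index h x = k \<longleftrightarrow> (\<forall>i. real_of_int (k$i) * h \<le> x$i \<and> x$i < real_of_int (k$i) * h + h)"
proof
  assume "bin_index h x = k" then show "\<forall>i. real_of_int (k$i) * h \<le> x$i \<and> x$i < real_of_int (k$i) * h + h"
    using bin_index_bounds[OF h] by blast
next
  assume a: "\<forall>i. real_of_int (k$i) * h \<le> x$i \<and> x$i < real_of_int (k$i) * h + h"
  have "\<lfloor>x$i / h\<rfloor> = k$i" for i
  proof -
    have "real_of_int (k$i) \<le> x$i / h" "x$i / h < real_of_int (k$i) + 1"
      using a h by (auto simp: field_simps)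
    then show ?thesis by linarith
  qed
  then show "bin_index h x = k" by (auto simp: bin_index_def vec_eq_iff)
qed

definition kdist :: "int^'d \<Rightarrow> int^'d \<Rightarrow> real" where
  "kdist k k0 = infnorm (\<chi> i. real_of_int (k$i - k0$i))"

lemma kdist_comp: "\<bar>real_of_int (k$i - k0$i)\<bar> \<le> kdist k k0"
  unfolding kdist_def using component_le_infnorm_cart[of "\<chi> i. real_of_int (k$i - k0$i)" i] by simp

lemma corner_dist:
  assumes h: "h > 0" and "bin_index h x0 = k0"
  shows "infnorm (bin_corner h k - x0) \<le> (kdist k k0 + 1) * h"
  unfolding infnorm_le_iff
proof
  fix i
  have b: "real_of_int (k0$i) * h \<le> x0$i" "x0$i < real_of_int (k0$i) * h + h"
    using bin_index_bounds[OF assms] by auto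
  have c: "\<bar>real_of_int (k$i - k0$i)\<bar> * h \<le> kdist k k0 * h"
    using kdist_comp[of k i k0] h by (simp add: mult_right_mono)
  have e: "\<bar>real_of_int (k$i - k0$i)\<bar> * h = \<bar>real_of_int (k$i) * h - real_of_int (k0$i) * h\<bar>"
    by (subst left_diff_distrib[symmetric]) (use h in \<open>simp add: abs_mult\<close>)
  have "\<bar>real_of_int (k$i) * h - x0$i\<bar> \<le> \<bar>real_of_int (k$i - k0$i)\<bar> * h + h"
    unfolding e using b by linarith
  then show "\<bar>(bin_corner h k - x0) $ i\<bar> \<le> (kdist k k0 + 1) * h"
    using c by (simp add: bin_corner_def algebra_simps)
qed

lemma point_dist:
  assumes h: "h > 0" and "bin_index h x0 = k0" and "bin_index h x = k"
  shows "(kdist k k0 - 1) * h \<le> infnorm (x - x0)"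
proof -
  obtain i where i: "kdist k k0 = \<bar>real_of_int (k$i - k0$i)\<bar>"
    using infnorm_attained[of "\<chi> i. real_of_int (k$i - k0$i)"] unfolding kdist_def by auto
  have b: "real_of_int (k0$i) * h \<le> x0$i" "x0$i < real_of_int (k0$i) * h + h"
    using bin_index_bounds[OF h assms(2)] by auto
  have b2: "real_of_int (k$i) * h \<le> x$i" "x$i < real_of_int (k$i) * h + h"
    using bin_index_bounds[OF h assms(3)] by auto
  have e: "\<bar>real_of_int (k$i - k0$i)\<bar> * h = \<bar>real_of_int (k$i) * h - real_of_int (k0$i) * h\<bar>"
    by (subst left_diff_distrib[symmetric]) (use h in \<open>simp add: abs_mult\<close>)
  have "(\<bar>real_of_int (k$i - k0$i)\<bar> - 1) * h \<le> \<bar>x$i - x0$i\<bar>"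
    unfolding left_diff_distrib e using b b2 by linarith
  also have "\<dots> \<le> infnorm (x - x0)" using component_le_infnorm_cart[of "x - x0" i] by simp
  finally show ?thesis using i by simp
qed

lemma bin_sets: "{x::real^'d. bin_index h x = k} \<in> sets lborel"
proof -
  have "{x::real^'d. bin_index h x = k} = {x. \<forall>i. \<lfloor>x$i / h\<rfloor> = k$i}"
    by (auto simp: bin_index_def vec_eq_iff)
  also have "\<dots> \<in> sets lborel" by measurable
  finally show ?thesis .
qed

lemma bin_box:
  assumes h: "h > 0"
  shows "box (bin_corner h k) (\<chi> i. real_of_int (k$i) * h + h) \<subseteq> {x::real^'d. bin_index h x = k}"
    "{x::real^'d. bin_index h x = k} \<subseteq> cbox (bin_corner h k) (\<chi> i. real_of_int (k$i) * h + h)"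
  using h by (auto simp: bin_index_iff mem_box_cart bin_corner_def less_imp_le)

lemma box_measure:
  assumes h: "h > 0"
  shows "emeasure lborel (cbox (bin_corner h k) (\<chi> i. real_of_int (k$i) * h + h) :: (real^'d) set) = ennreal (h ^ CARD('d))"
    "emeasure lborel (box (bin_corner h k) (\<chi> i. real_of_int (k$i) * h + h) :: (real^'d) set) = ennreal (h ^ CARD('d))"
proof -
  let ?a = "bin_corner h k :: real^'d" and ?b = "(\<chi> i. real_of_int (k$i) * h + h) :: real^'d"
  have "?a \<in> cbox ?a ?b" using h by (simp add: mem_box_cart bin_corner_def)
  then have ne: "cbox ?a ?b \<noteq> {}" by auto
  have "measure lborel (cbox ?a ?b) = h ^ CARD('d)"
    using content_cbox_cart[OF ne] by (simp add: bin_corner_def)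
  then show "emeasure lborel (cbox ?a ?b) = ennreal (h ^ CARD('d))"
    using emeasure_eq_ennreal_measure[of lborel "cbox ?a ?b"] emeasure_lborel_cbox_finite[of ?a ?b] by simp
  have "measure lborel (box ?a ?b) = measure lborel (cbox ?a ?b)"
    by (simp only: measure_lborel_box_eq measure_lborel_cbox_eq)
  then show "emeasure lborel (box ?a ?b) = ennreal (h ^ CARD('d))"
    using \<open>measure lborel (cbox ?a ?b) = h ^ CARD('d)\<close>
    using emeasure_eq_ennreal_measure[of lborel "box ?a ?b"] emeasure_lborel_box_finite[of ?a ?b] by simp
qed

lemma bin_upper:
  fixes f :: "real^'d \<Rightarrow> real"
  assumes h: "h > 0" and fm: "f \<in> borel_measurable lborel" and c: "c \<ge> 0"
    and b: "\<And>x. bin_index h x = k \<Longrightarrow> f x \<le> c"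
  shows "measure (density lborel (\<lambda>x. ennreal (f x))) {x. bin_index h x = k} \<le> c * h ^ CARD('d)"
proof -
  let ?S = "{x::real^'d. bin_index h x = k}"
  let ?C = "cbox (bin_corner h k) (\<chi> i. real_of_int (k$i) * h + h) :: (real^'d) set"
  have "emeasure (density lborel (\<lambda>x. ennreal (f x))) ?S = (\<integral>\<^sup>+ x. ennreal (f x) * indicator ?S x \<partial>lborel)"
    using fm bin_sets by (intro emeasure_density) auto
  also have "\<dots> \<le> (\<integral>\<^sup>+ x. ennreal c * indicator ?C x \<partial>lborel)"
    using bin_box(2)[OF h, of k] b by (intro nn_integral_mono) (auto simp: indicator_def ennreal_leI)
  also have "\<dots> = ennreal c * emeasure lborel ?C"
    by (simp add: nn_integral_cmult_indicator)
  also have "\<dots> = ennreal (c * h ^ CARD('d))"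
    using box_measure(1)[OF h, of k] c h by (simp add: ennreal_mult)
  finally have "emeasure (density lborel (\<lambda>x. ennreal (f x))) ?S \<le> ennreal (c * h ^ CARD('d))" .
  moreover have nn: "0 \<le> c * h ^ CARD('d)" using c h by simp
  ultimately show ?thesis unfolding measure_def by (intro enn2real_leI)
qed

lemma bin_lower:
  fixes f :: "real^'d \<Rightarrow> real"
  assumes h: "h > 0" and fm: "f \<in> borel_measurable lborel"
    and fin: "emeasure (density lborel (\<lambda>x. ennreal (f x))) {x. bin_index h x = k} < \<infinity>"
    and b: "\<And>x. bin_index h x = k \<Longrightarrow> f x \<ge> c"
  shows "measure (density lborel (\<lambda>x. ennreal (f x))) {x. bin_index h x = k} \<ge> c * h ^ CARD('d)"
proof (cases "c \<ge> 0")
  case False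
  then have "c * h ^ CARD('d) \<le> 0" using h by (simp add: mult_nonpos_nonneg)
  then show ?thesis by (meson measure_nonneg order_trans)
next
  case c: True
  let ?S = "{x::real^'d. bin_index h x = k}"
  let ?C = "box (bin_corner h k) (\<chi> i. real_of_int (k$i) * h + h) :: (real^'d) set"
  have "ennreal (c * h ^ CARD('d)) = ennreal c * emeasure lborel ?C"
    using box_measure(2)[OF h, of k] c h by (simp add: ennreal_mult)
  also have "\<dots> = (\<integral>\<^sup>+ x. ennreal c * indicator ?C x \<partial>lborel)"
    by (simp add: nn_integral_cmult_indicator)
  also have "\<dots> \<le> (\<integral>\<^sup>+ x. ennreal (f x) * indicator ?S x \<partial>lborel)"
    using bin_box(1)[OF h, of k] b by (intro nn_integral_mono) (auto simp: indicator_def ennreal_leI)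
  also have "\<dots> = emeasure (density lborel (\<lambda>x. ennreal (f x))) ?S"
    using fm bin_sets by (intro emeasure_density[symmetric]) auto
  finally have "ennreal (c * h ^ CARD('d)) \<le> emeasure (density lborel (\<lambda>x. ennreal (f x))) ?S" .
  then have "enn2real (ennreal (c * h ^ CARD('d))) \<le> enn2real (emeasure (density lborel (\<lambda>x. ennreal (f x))) ?S)"
    using fin by (intro enn2real_mono) auto
  moreover have nn: "0 \<le> c * h ^ CARD('d)" using c h by simp
  ultimately show ?thesis unfolding measure_def by simp
qed

lemma exp_powr_summable:
  fixes c b :: real assumes c: "c > 0" and b: "b > 0"
  shows "summable (\<lambda>n::nat. exp (-c * real n powr b))"
proof -
  have l: "((\<lambda>x::real. x^2 * exp(-c * x powr b)) \<longlongrightarrow> 0) at_top"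
    using c b by real_asymp
  have "((\<lambda>n::nat. real n ^ 2 * exp(-c * real n powr b)) \<longlongrightarrow> 0) sequentially"
    using filterlim_compose[OF l filterlim_real_sequentially] by (simp add: o_def)
  then have ev: "eventually (\<lambda>n. real n ^ 2 * exp(-c * real n powr b) < 1) sequentially"
    by (rule order_tendstoD) simp
  have "eventually (\<lambda>n. norm (exp (-c * real n powr b)) \<le> inverse (real n ^ 2)) sequentially"
    using ev eventually_gt_at_top[of "0::nat"]
  proof eventually_elim
    case (elim n)
    then have "real n ^ 2 > 0" by simp
    with elim show ?case by (simp add: field_simps)
  qed
  then show ?thesis
    by (rule summable_comparison_test_ev) (rule inverse_power_summable, simp)
qed

lemma one_dim_sum:
  fixes c b :: real and L :: int assumes c: "c > 0" and b: "b > 0"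
  shows "(\<Sum>z\<in>{-L..L}. exp (-c * \<bar>real_of_int z\<bar> powr b)) \<le> 2 * (\<Sum>n. exp (-c * real n powr b))"
proof -
  let ?S = "\<Sum>n. exp (-c * real n powr b)"
  let ?psi = "\<lambda>z::int. exp (-c * \<bar>real_of_int z\<bar> powr b)"
  have sm: "summable (\<lambda>n::nat. exp (-c * real n powr b))" by (rule exp_powr_summable[OF c b])
  define N where "N = nat L"
  define A1 where "A1 = (\<lambda>n. int n) ` {..N}"
  define A2 where "A2 = (\<lambda>n. - int n) ` {..N}"
  have sub: "{-L..L} \<subseteq> A1 \<union> A2"
  proof
    fix z assume z: "z \<in> {-L..L}"
    show "z \<in> A1 \<union> A2"
    proof (cases "z \<ge> 0")
      case True
      then have "z = int (nat z)" "nat z \<in> {..N}" using z by (auto simp: N_def)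
      then show ?thesis unfolding A1_def by blast
    next
      case False
      then have "z = - int (nat (-z))" "nat (-z) \<in> {..N}" using z by (auto simp: N_def)
      then show ?thesis unfolding A2_def by blast
    qed
  qed
  have fin: "finite A1" "finite A2" unfolding A1_def A2_def by auto
  have "(\<Sum>z\<in>{-L..L}. ?psi z) \<le> (\<Sum>z\<in>A1 \<union> A2. ?psi z)"
    using sub fin by (intro sum_mono2) auto
  also have "\<dots> \<le> (\<Sum>z\<in>A1. ?psi z) + (\<Sum>z\<in>A2. ?psi z)"
  proof -
    have "(\<Sum>z\<in>A1 \<union> A2. ?psi z) + (\<Sum>z\<in>A1 \<inter> A2. ?psi z) = (\<Sum>z\<in>A1. ?psi z) + (\<Sum>z\<in>A2. ?psi z)"
      using fin by (rule sum.union_inter)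
    moreover have "(\<Sum>z\<in>A1 \<inter> A2. ?psi z) \<ge> 0" by (intro sum_nonneg) auto
    ultimately show ?thesis by linarith
  qed
  also have "(\<Sum>z\<in>A1. ?psi z) \<le> (\<Sum>n\<in>{..N}. exp (-c * real n powr b))"
    unfolding A1_def by (rule order_trans[OF sum_image_le]) (auto simp: o_def)
  also have "(\<Sum>z\<in>A2. ?psi z) \<le> (\<Sum>n\<in>{..N}. exp (-c * real n powr b))"
    unfolding A2_def by (rule order_trans[OF sum_image_le]) (auto simp: o_def)
  also have "(\<Sum>n\<in>{..N}. exp (-c * real n powr b)) \<le> ?S"
    using sm by (intro sum_le_suminf) auto
  finally show ?thesis by simp
qed

lemma kdist_nonneg: "kdist k k0 \<ge> 0"
  unfolding kdist_def by (rule infnorm_pos_le)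

lemma lattice_sum:
  fixes k0 :: "int^'d" and F :: "(int^'d) set" and c b :: real
  assumes F: "finite F" and c: "c > 0" and b: "b > 0"
  shows "(\<Sum>k\<in>F. exp (-c * kdist k k0 powr b))
    \<le> (2 * (\<Sum>n. exp (-(c / real CARD('d)) * real n powr b))) ^ CARD('d)"
proof -
  define d where "d = real CARD('d)"
  have d0: "d > 0" unfolding d_def by simp
  define c' where "c' = c / d"
  have c'0: "c' > 0" unfolding c'_def using c d0 by simp
  let ?S = "\<Sum>n. exp (-c' * real n powr b)"
  let ?psi = "\<lambda>z::int. exp (-c' * \<bar>real_of_int z\<bar> powr b)"
  have a: "exp (-c * kdist k k0 powr b) \<le> (\<Prod>i\<in>UNIV. ?psi (k$i - k0$i))" for k
  proof -
    have "(\<Prod>i\<in>UNIV. ?psi (k$i - k0$i)) = exp (\<Sum>i\<in>UNIV. -c' * \<bar>real_of_int (k$i - k0$i)\<bar> powr b)"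
      by (simp add: exp_sum)
    moreover have "(\<Sum>i\<in>UNIV. -c' * \<bar>real_of_int (k$i - k0$i)\<bar> powr b) \<ge> (\<Sum>i\<in>(UNIV::'d set). -c' * kdist k k0 powr b)"
    proof (intro sum_mono)
      fix i :: 'd
      have "\<bar>real_of_int (k$i - k0$i)\<bar> powr b \<le> kdist k k0 powr b"
        using kdist_comp[of k i k0] b by (intro powr_mono2) auto
      then show "-c' * kdist k k0 powr b \<le> -c' * \<bar>real_of_int (k$i - k0$i)\<bar> powr b"
        using c'0 by simp
    qed
    moreover have "(\<Sum>i\<in>(UNIV::'d set). -c' * kdist k k0 powr b) = -c * kdist k k0 powr b"
    proof -
      have "real CARD('d) * c' = c" using d0 by (simp add: c'_def d_def)
      then show ?thesis by (simp add: mult.assoc[symmetric])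
    qed
    ultimately show ?thesis by (metis exp_le_cancel_iff)
  qed
  define L where "L = \<lceil>\<Sum>k\<in>F. kdist k k0\<rceil>"
  have Lb: "\<bar>k$i - k0$i\<bar> \<le> L" if "k \<in> F" for k i
  proof -
    have "kdist k k0 \<le> (\<Sum>k\<in>F. kdist k k0)"
      using F that by (intro member_le_sum) (auto simp: kdist_nonneg)
    then have "real_of_int \<bar>k$i - k0$i\<bar> \<le> real_of_int L"
      using kdist_comp[of k i k0] unfolding L_def by linarith
    then show ?thesis by linarith
  qed
  define B where "B i = (\<lambda>z. z + k0$i) ` {-L..L}" for i
  have "(\<Sum>k\<in>F. exp (-c * kdist k k0 powr b)) \<le> (\<Sum>k\<in>F. \<Prod>i\<in>UNIV. ?psi (k$i - k0$i))"
    by (intro sum_mono a)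
  also have "\<dots> = (\<Sum>g\<in>vec_nth ` F. \<Prod>i\<in>UNIV. ?psi (g i - k0$i))"
    by (subst sum.reindex) (auto simp: inj_on_def vec_eq_iff)
  also have "\<dots> \<le> (\<Sum>g\<in>PiE UNIV B. \<Prod>i\<in>UNIV. ?psi (g i - k0$i))"
  proof (intro sum_mono2)
    show "finite (PiE UNIV B)" unfolding B_def by (intro finite_PiE) auto
    show "vec_nth ` F \<subseteq> PiE UNIV B"
    proof
      fix g assume "g \<in> vec_nth ` F"
      then obtain k where k: "k \<in> F" "g = vec_nth k" by auto
      have "k$i \<in> B i" for i
      proof -
        have "k$i - k0$i \<in> {-L..L}" using Lb[OF k(1), of i] by auto
        then show ?thesis unfolding B_def by (auto intro!: image_eqI[where x="k$i - k0$i"])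
      qed
      then show "g \<in> PiE UNIV B" using k by auto
    qed
  qed (auto intro: prod_nonneg)
  also have "\<dots> = (\<Prod>i\<in>UNIV. \<Sum>z\<in>B i. ?psi (z - k0$i))"
    by (rule prod_sum_PiE[symmetric]) (auto simp: B_def)
  also have "\<dots> \<le> (\<Prod>i\<in>(UNIV::'d set). 2 * ?S)"
  proof (intro prod_mono conjI)
    fix i :: 'd
    show "0 \<le> (\<Sum>z\<in>B i. ?psi (z - k0$i))" by (intro sum_nonneg) auto
    have "(\<Sum>z\<in>B i. ?psi (z - k0$i)) = (\<Sum>z\<in>{-L..L}. ?psi z)"
      unfolding B_def by (subst sum.reindex) (auto simp: inj_on_def)
    also have "\<dots> \<le> 2 * ?S" by (rule one_dim_sum[OF c'0 b])
    finally show "(\<Sum>z\<in>B i. ?psi (z - k0$i)) \<le> 2 * ?S" .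
  qed
  also have "\<dots> = (2 * ?S) ^ CARD('d)" by simp
  finally show ?thesis unfolding c'_def d_def by simp
qed

lemma card_as_sum: fixes n :: nat shows "real (card {j\<in>{..<n}. P j}) = (\<Sum>j<n. if P j then 1 else 0 :: real)"
proof -
  have "(\<Sum>j\<in>{j\<in>{..<n}. P j}. 1 :: real) = (\<Sum>j<n. if P j then 1 else 0 :: real)"
    by (rule sum.inter_filter) (rule finite_lessThan)
  then show ?thesis by simp
qed

lemma good_iff:
  assumes h: "h > 0"
  shows "(\<forall>xh \<in> mode_hunting_outputs h n X. infnorm (xh - x0) \<le> c) \<longleftrightarrow>
    (\<forall>i<n. (\<forall>j<n. (\<Sum>j'<n. if (\<forall>l. \<lfloor>X j' $ l / h\<rfloor> = \<lfloor>X j $ l / h\<rfloor>) then 1 else 0 :: real)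
                 \<le> (\<Sum>j'<n. if (\<forall>l. \<lfloor>X j' $ l / h\<rfloor> = \<lfloor>X i $ l / h\<rfloor>) then 1 else 0 :: real))
        \<longrightarrow> (\<forall>l. \<bar>real_of_int \<lfloor>X i $ l / h\<rfloor> * h - (x0::real^'d) $ l\<bar> \<le> c))"
proof -
  have be: "bin_index h (X j') = bin_index h (X j) \<longleftrightarrow> (\<forall>l. \<lfloor>X j' $ l / h\<rfloor> = \<lfloor>X j $ l / h\<rfloor>)" for j' j
    by (simp add: bin_index_def vec_eq_iff)
  have bc: "real (bin_count h n X (bin_index h (X j))) =
     (\<Sum>j'<n. if (\<forall>l. \<lfloor>X j' $ l / h\<rfloor> = \<lfloor>X j $ l / h\<rfloor>) then 1 else 0 :: real)" for j
    unfolding bin_count_def card_as_sum be ..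
  have le: "bin_count h n X (bin_index h (X j)) \<le> bin_count h n X (bin_index h (X i)) \<longleftrightarrow>
    (\<Sum>j'<n. if (\<forall>l. \<lfloor>X j' $ l / h\<rfloor> = \<lfloor>X j $ l / h\<rfloor>) then 1 else 0 :: real)
      \<le> (\<Sum>j'<n. if (\<forall>l. \<lfloor>X j' $ l / h\<rfloor> = \<lfloor>X i $ l / h\<rfloor>) then 1 else 0 :: real)" for i j
    unfolding bc[symmetric] by simp
  have inf: "infnorm (bin_corner h (bin_index h (X i)) - x0) \<le> c \<longleftrightarrow>
     (\<forall>l. \<bar>real_of_int \<lfloor>X i $ l / h\<rfloor> * h - x0 $ l\<bar> \<le> c)" for i
    unfolding infnorm_le_iff by (simp add: bin_corner_def bin_index_def)
  show ?thesis unfolding mode_hunting_outputs_def using le inf by auto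
qed

lemma good_sets_abs:
  fixes a :: "nat \<Rightarrow> 'x \<Rightarrow> real" and e :: "nat \<Rightarrow> 'd::finite \<Rightarrow> 'x \<Rightarrow> real"
  assumes am: "\<And>i. i < n \<Longrightarrow> a i \<in> borel_measurable M"
    and em: "\<And>i l. i < n \<Longrightarrow> e i l \<in> borel_measurable M"
  shows "{X \<in> space M. \<forall>i<n. (\<forall>j<n. a j X \<le> a i X) \<longrightarrow> (\<forall>l. e i l X \<le> c)} \<in> sets M"
proof -
  have s1: "{X \<in> space M. \<forall>j<n. a j X \<le> a i X} \<in> sets M" if i: "i < n" for i
  proof -
    have "{X \<in> space M. \<forall>j<n. a j X \<le> a i X} = space M - (\<Union>j\<in>{..<n}. space M - {X \<in> space M. a j X \<le> a i X})"
      by blast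
    also have "\<dots> \<in> sets M"
      apply (rule sets.Diff)
       apply (rule sets.top)
      apply (rule sets.finite_UN)
       apply simp
      apply (rule sets.Diff)
       apply (rule sets.top)
      apply (rule borel_measurable_le)
      using am i by auto
    finally show ?thesis .
  qed
  have s2: "{X \<in> space M. \<forall>l. e i l X \<le> c} \<in> sets M" if i: "i < n" for i
  proof -
    have "{X \<in> space M. \<forall>l. e i l X \<le> c} = space M - (\<Union>l\<in>UNIV. space M - {X \<in> space M. e i l X \<le> c})"
      by blast
    also have "\<dots> \<in> sets M"
      apply (rule sets.Diff)
       apply (rule sets.top)
      apply (rule sets.finite_UN)
       apply simp
      apply (rule sets.Diff)
       apply (rule sets.top)
      apply (rule borel_measurable_le)
      using em i by auto
    finally show ?thesis .
  qed
  have "{X \<in> space M. \<forall>i<n. (\<forall>j<n. a j X \<le> a i X) \<longrightarrow> (\<forall>l. e i l X \<le> c)} =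
     space M - (\<Union>i\<in>{..<n}. space M - ((space M - {X \<in> space M. \<forall>j<n. a j X \<le> a i X}) \<union> {X \<in> space M. \<forall>l. e i l X \<le> c}))"
    by blast
  also have "\<dots> \<in> sets M"
    apply (rule sets.Diff)
     apply (rule sets.top)
    apply (rule sets.finite_UN)
     apply simp
    apply (rule sets.Diff)
     apply (rule sets.top)
    apply (rule sets.Un)
     apply (rule sets.Diff)
      apply (rule sets.top)
     apply (rule s1, simp)
    apply (rule s2, simp)
    done
  finally show ?thesis .
qed

lemma vec_nth_meas[measurable]: "(\<lambda>x::real^'d. x $ l) \<in> borel_measurable borel"
  by (intro borel_measurable_continuous_onI continuous_intros)

lemma good_meas:
  fixes M :: "(real^'d) measure"
  assumes h: "h > 0" and sM: "sets M = sets borel"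
  shows "{X \<in> space (PiM {..<n} (\<lambda>_. M)). \<forall>xh \<in> mode_hunting_outputs h n X. infnorm (xh - x0) \<le> c}
     \<in> sets (PiM {..<n} (\<lambda>_. M))"
proof -
  let ?P = "PiM {..<n} (\<lambda>_. borel :: (real^'d) measure)"
  define D where "D j' j X = (\<Sum>l\<in>UNIV. \<bar>real_of_int \<lfloor>X j' $ l / h\<rfloor> - real_of_int \<lfloor>X j $ l / h\<rfloor>\<bar>)"
    for j' j :: nat and X :: "nat \<Rightarrow> real^'d"
  define a where "a j X = (\<Sum>j'<n. if D j' j X = 0 then 1 else 0 :: real)" for j :: nat and X
  define e where "e i l X = \<bar>real_of_int \<lfloor>X i $ l / h\<rfloor> * h - (x0::real^'d) $ l\<bar>" for i :: nat and l and X :: "nat \<Rightarrow> real^'d"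
  have Dm: "D j' j \<in> borel_measurable ?P" if "j < n" "j' < n" for j j'
  proof -
    have [measurable]: "(\<lambda>X. X j) \<in> measurable ?P borel"
      using that by (intro measurable_component_singleton) auto
    have [measurable]: "(\<lambda>X. X j') \<in> measurable ?P borel"
      using that by (intro measurable_component_singleton) auto
    show ?thesis unfolding D_def by measurable
  qed
  have am: "a j \<in> borel_measurable ?P" if "j < n" for j
    unfolding a_def
  proof (rule borel_measurable_sum)
    fix j' assume "j' \<in> {..<n}"
    then have [measurable]: "D j' j \<in> borel_measurable ?P" using Dm that by auto
    show "(\<lambda>X. if D j' j X = 0 then 1 else 0 :: real) \<in> borel_measurable ?P" by measurable
  qed
  have em: "e i l \<in> borel_measurable ?P" if "i < n" for i l
  proof -
    have [measurable]: "(\<lambda>X. X i) \<in> measurable ?P borel"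
      using that by (intro measurable_component_singleton) auto
    show ?thesis unfolding e_def by measurable
  qed
  have S: "{X \<in> space ?P. \<forall>i<n. (\<forall>j<n. a j X \<le> a i X) \<longrightarrow> (\<forall>l. e i l X \<le> c)} \<in> sets ?P"
    by (rule good_sets_abs[OF am em])
  have Deq: "D j' j X = 0 \<longleftrightarrow> (\<forall>l. \<lfloor>X j' $ l / h\<rfloor> = \<lfloor>X j $ l / h\<rfloor>)" for j' j X
    unfolding D_def by (subst sum_nonneg_eq_0_iff) auto
  have eq: "(\<forall>xh \<in> mode_hunting_outputs h n X. infnorm (xh - x0) \<le> c) \<longleftrightarrow>
      (\<forall>i<n. (\<forall>j<n. a j X \<le> a i X) \<longrightarrow> (\<forall>l. e i l X \<le> c))" for X
    unfolding good_iff[OF h] a_def e_def Deq ..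
  have sp: "space (PiM {..<n} (\<lambda>_. M)) = space ?P"
    using sets_eq_imp_space_eq[OF sM] by (simp add: space_PiM)
  have ss: "sets (PiM {..<n} (\<lambda>_. M)) = sets ?P"
    by (rule sets_PiM_cong) (auto simp: sM)
  show ?thesis unfolding sp ss eq using S .
qed

lemma count_sets:
  fixes M :: "'a measure" and n :: nat
  assumes B: "B \<in> sets M" and B0: "B0 \<in> sets M"
  shows "{X \<in> space (PiM {..<n} (\<lambda>_. M)). card {j\<in>{..<n}. X j \<in> B0} \<le> card {j\<in>{..<n}. X j \<in> B}}
     \<in> sets (PiM {..<n} (\<lambda>_. M))"
proof -
  let ?P = "PiM {..<n} (\<lambda>_. M)"
  have im: "(\<lambda>X. if X j \<in> C then 1 else 0 :: real) \<in> borel_measurable ?P" if "j \<in> {..<n}" "C \<in> sets M" for j C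
  proof -
    have [measurable]: "(\<lambda>X. X j) \<in> measurable ?P M"
      using that by (intro measurable_component_singleton) auto
    have [measurable]: "C \<in> sets M" by (rule that(2))
    show ?thesis by measurable
  qed
  have "{X \<in> space ?P. (\<Sum>j<n. if X j \<in> B0 then 1 else 0 :: real) \<le> (\<Sum>j<n. if X j \<in> B then 1 else 0 :: real)}
     \<in> sets ?P"
    by (intro borel_measurable_le borel_measurable_sum im B B0)
  moreover have iff: "card {j\<in>{..<n}. X j \<in> B0} \<le> card {j\<in>{..<n}. X j \<in> B} \<longleftrightarrow>
     (\<Sum>j<n. if X j \<in> B0 then 1 else 0 :: real) \<le> (\<Sum>j<n. if X j \<in> B then 1 else 0 :: real)" for X
  proof -
    have "card {j\<in>{..<n}. X j \<in> B0} \<le> card {j\<in>{..<n}. X j \<in> B} \<longleftrightarrow>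
      real (card {j\<in>{..<n}. X j \<in> B0}) \<le> real (card {j\<in>{..<n}. X j \<in> B})"
      by (rule of_nat_le_iff[symmetric])
    also have "\<dots> \<longleftrightarrow> (\<Sum>j<n. if X j \<in> B0 then 1 else 0 :: real) \<le> (\<Sum>j<n. if X j \<in> B then 1 else 0 :: real)"
      by (simp only: card_as_sum)
    finally show ?thesis .
  qed
  ultimately show ?thesis by (simp only: iff)
qed

lemma finite_int_box: "finite {k::int^'d. \<forall>i. \<bar>k$i - k0$i\<bar> \<le> L}"
proof -
  have "{k::int^'d. \<forall>i. \<bar>k$i - k0$i\<bar> \<le> L} \<subseteq> vec_lambda ` PiE UNIV (\<lambda>i. {k0$i - L..k0$i + L})"
  proof
    fix k :: "int^'d" assume "k \<in> {k::int^'d. \<forall>i. \<bar>k$i - k0$i\<bar> \<le> L}"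
    then have a: "\<bar>k$i - k0$i\<bar> \<le> L" for i by auto
    have "k$i \<in> {k0$i - L..k0$i + L}" for i using a[of i] by (simp add: abs_le_iff)
    then have "vec_nth k \<in> PiE UNIV (\<lambda>i. {k0$i - L..k0$i + L})" by auto
    then show "k \<in> vec_lambda ` PiE UNIV (\<lambda>i. {k0$i - L..k0$i + L})"
      by (intro image_eqI[where x="vec_nth k"]) auto
  qed
  moreover have "finite (vec_lambda ` PiE UNIV (\<lambda>i. {k0$i - L..k0$i + L}) :: (int^'d) set)"
    by (intro finite_imageI finite_PiE) auto
  ultimately show ?thesis by (rule finite_subset)
qed

theorem theorem1:
  fixes f :: "real^'d \<Rightarrow> real" and x0 :: "real^'d"
    and c0 C0 h0 \<beta> :: real
  assumes f_meas: "f \<in> borel_measurable lborel"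
    and f_nonneg: "\<And>x. f x \<ge> 0"
    and f_int: "(\<integral>\<^sup>+ x. ennreal (f x) \<partial>lborel) = 1"
    and f_compact_support: "\<exists>K. compact K \<and> (\<forall>x. x \<notin> K \<longrightarrow> f x = 0)"
    and unique_mode: "\<And>x. x \<noteq> x0 \<Longrightarrow> f x < f x0"
    and params: "0 < c0" "c0 < C0" "0 < h0" "0 < \<beta>"
    and near: "\<And>x. infnorm (x - x0) \<le> h0 \<Longrightarrow>
                 f x0 - C0 * infnorm (x - x0) powr \<beta> \<le> f x \<and>
                 f x \<le> f x0 - c0 * infnorm (x - x0) powr \<beta>"
    and far: "\<And>x. infnorm (x - x0) \<ge> h0 \<Longrightarrow> f x \<le> f x0 - c0 * h0 powr \<beta>"
  shows "\<exists>A>0. \<forall>(n::nat) (h::real). h > 0 \<longrightarrow>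
           measure (PiM {..<n} (\<lambda>_. density lborel (\<lambda>x. ennreal (f x))))
             {X \<in> space (PiM {..<n} (\<lambda>_. density lborel (\<lambda>x. ennreal (f x)))).
                \<forall>xh \<in> mode_hunting_outputs h n X. infnorm (xh - x0) \<le> A * h}
           \<ge> 1 - A * exp (- real n * h powr (real CARD('d) + 2 * \<beta>) / A)"
proof -
  define f0 where "f0 = f x0"
  have fle: "f x \<le> f0" for x
    using unique_mode[of x] unfolding f0_def by (cases "x = x0") auto
  obtain K where K: "compact K" "\<And>x. x \<notin> K \<Longrightarrow> f x = 0"
    using f_compact_support by blast
  obtain b where b: "b > 0" "\<And>x. x \<in> K \<Longrightarrow> norm x \<le> b"
    using compact_imp_bounded[OF K(1)] unfolding bounded_pos by blast
  define R1 where "R1 = max (b + norm x0) h0"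
  have R1h0: "R1 \<ge> h0" and R1pos: "R1 > 0" using params(3) unfolding R1_def by auto
  have fQ: "infnorm (x - x0) \<le> R1" if "f x \<noteq> 0" for x
  proof -
    have "x \<in> K" using K(2) that by blast
    then have "norm x \<le> b" by (rule b(2))
    then have "norm (x - x0) \<le> b + norm x0" using norm_triangle_ineq4[of x x0] by linarith
    then show ?thesis using infnorm_le_norm[of "x - x0"] unfolding R1_def by linarith
  qed
  define \<mu> where "\<mu> = density lborel (\<lambda>x. ennreal (f x))"
  have s\<mu>: "sets \<mu> = sets borel" unfolding \<mu>_def by simp
  have sp\<mu>: "space \<mu> = UNIV" unfolding \<mu>_def by simp
  have P\<mu>: "prob_space \<mu>"
  proof
    have "emeasure \<mu> UNIV = (\<integral>\<^sup>+ x. ennreal (f x) * indicator UNIV x \<partial>lborel)"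
      unfolding \<mu>_def using f_meas by (intro emeasure_density) auto
    then show "emeasure \<mu> (space \<mu>) = 1" using f_int sp\<mu> by simp
  qed
  interpret Mu: prob_space \<mu> by (rule P\<mu>)
  have f0pos: "f0 > 0"
  proof (rule ccontr)
    assume "\<not> f0 > 0"
    then have "f x = 0" for x using fle[of x] f_nonneg[of x] by linarith
    then show False using f_int by simp
  qed
  have AEQ: "AE x in \<mu>. infnorm (x - x0) \<le> R1"
    unfolding \<mu>_def using f_meas fQ by (subst AE_density) (auto intro!: AE_I2)
  define \<rho> where "\<rho> = h0 / R1"
  have \<rho>: "\<rho> > 0" "\<rho> \<le> 1" unfolding \<rho>_def using params(3) R1h0 R1pos by auto
  define Xc where "Xc = 2 * C0 / (c0 * \<rho> powr \<beta>)"
  have Xc: "Xc > 0" unfolding Xc_def using params \<rho> by auto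
  define M0 where "M0 = Xc powr (1 / \<beta>) + 2"
  have M0: "M0 \<ge> 2" unfolding M0_def by simp
  have M0b: "c0 * \<rho> powr \<beta> * (m - 1) powr \<beta> \<ge> 2 * C0" if "m \<ge> M0" for m
  proof -
    have "Xc powr (1/\<beta>) \<le> m - 1" using that unfolding M0_def by simp
    then have "(Xc powr (1/\<beta>)) powr \<beta> \<le> (m - 1) powr \<beta>"
      using params(4) by (intro powr_mono2) auto
    also have "(Xc powr (1/\<beta>)) powr \<beta> = Xc" using Xc params(4) by (simp add: powr_powr)
    finally have "Xc \<le> (m - 1) powr \<beta>" .
    then have "c0 * \<rho> powr \<beta> * Xc \<le> c0 * \<rho> powr \<beta> * (m - 1) powr \<beta>"
      using params \<rho> by (intro mult_left_mono) auto
    moreover have "c0 * \<rho> powr \<beta> * Xc = 2 * C0" unfolding Xc_def using params \<rho> by simp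
    ultimately show ?thesis by simp
  qed
  define \<kappa> where "\<kappa> = c0 * \<rho> powr \<beta> / (2 * 2 powr \<beta>)"
  have \<kappa>: "\<kappa> > 0" unfolding \<kappa>_def using params \<rho> by simp
  define \<gamma> where "\<gamma> = \<kappa>^2 / (8 * f0)"
  have \<gamma>: "\<gamma> > 0" unfolding \<gamma>_def using \<kappa> f0pos by simp
  define S2 where "S2 = (2 * (\<Sum>n. exp (-((\<gamma>/2) / real CARD('d)) * real n powr (2*\<beta>))))^CARD('d)"
  define A where "A = max (max 2 (2/\<gamma>)) (max S2 (max (M0 + 1) (R1/h0 + 3)))"
  have A2: "A \<ge> 2" and A\<gamma>: "A \<ge> 2/\<gamma>" and AS2: "A \<ge> S2" and AM0: "A \<ge> M0 + 1" and AR: "A \<ge> R1/h0 + 3"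
    unfolding A_def by auto
  have Apos: "A > 0" using A2 by simp
  have main: "measure (PiM {..<n} (\<lambda>_. \<mu>))
             {X \<in> space (PiM {..<n} (\<lambda>_. \<mu>)). \<forall>xh \<in> mode_hunting_outputs h n X. infnorm (xh - x0) \<le> A * h}
           \<ge> 1 - A * exp (- real n * h powr (real CARD('d) + 2 * \<beta>) / A)" if h: "h > 0" for n h
  proof -
    let ?P = "PiM {..<n} (\<lambda>_. \<mu>)"
    interpret PP: prob_space ?P by (intro prob_space_PiM P\<mu>)
    define t where "t = real n * h powr (real CARD('d) + 2 * \<beta>)"
    define good where "good = {X \<in> space ?P. \<forall>xh \<in> mode_hunting_outputs h n X. infnorm (xh - x0) \<le> A * h}"
    have good_sets: "good \<in> sets ?P" unfolding good_def by (rule good_meas[OF h s\<mu>])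
    have t0: "t \<ge> 0" unfolding t_def by simp
    have goal: "measure ?P good \<ge> 1 - A * exp (- t / A)"
    proof (cases "t < 1")
      case True
      have "t / A < 1 / 2" using True A2 t0 by (simp add: divide_less_eq)
      then have "exp (- t / A) \<ge> 1 / 2" using exp_ge_add_one_self[of "- t / A"] by simp
      then have "A * exp (- t / A) \<ge> 2 * (1/2)" using A2 by (intro mult_mono) auto
      then have "1 - A * exp (- t / A) \<le> 0" by simp
      then show ?thesis using measure_nonneg[of ?P good] by linarith
    next
      case False
      then have t1: "t \<ge> 1" by simp
      define k0 where "k0 = bin_index h x0"
      define Bk where "Bk k = {x::real^'d. bin_index h x = k}" for k
      define Fb where "Fb = {k. kdist k k0 > A - 1 \<and> (\<exists>y. bin_index h y = k \<and> infnorm (y - x0) \<le> R1)}"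
      define Ev where "Ev k = {X \<in> space ?P. card {j\<in>{..<n}. X j \<in> Bk k0} \<le> card {j\<in>{..<n}. X j \<in> Bk k}}" for k
      define Eout where "Eout = {X \<in> space ?P. \<not> (\<forall>j\<in>{..<n}. infnorm (X j - x0) \<le> R1)}"
      have Bk_sets: "Bk k \<in> sets \<mu>" for k unfolding Bk_def s\<mu> using bin_sets[of h k] by simp
      have Ev_sets: "Ev k \<in> sets ?P" for k unfolding Ev_def by (rule count_sets[OF Bk_sets Bk_sets])
      have AEall: "AE X in ?P. \<forall>j\<in>{..<n}. infnorm (X j - x0) \<le> R1"
      proof (rule eventually_ball_finite)
        show "finite {..<n}" by simp
        show "\<forall>j\<in>{..<n}. AE X in ?P. infnorm (X j - x0) \<le> R1"
          using AE_PiM_component[where M="\<lambda>_. \<mu>" and I="{..<n}" and P="\<lambda>x. infnorm (x - x0) \<le> R1"] P\<mu> AEQ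
          by blast
      qed
      then obtain N where N0: "{X \<in> space ?P. \<not> (\<forall>j\<in>{..<n}. infnorm (X j - x0) \<le> R1)} \<subseteq> N"
        "emeasure ?P N = 0" "N \<in> sets ?P" by (rule AE_E)
      have N: "Eout \<subseteq> N" "N \<in> null_sets ?P" using N0 unfolding Eout_def by (auto intro: null_setsI)
      define L where "L = \<lceil>R1 / h\<rceil> + 1"
      have Fb_sub: "Fb \<subseteq> {k. \<forall>i. \<bar>k$i - k0$i\<bar> \<le> L}"
      proof
        fix k assume "k \<in> Fb"
        then obtain y where y: "bin_index h y = k" "infnorm (y - x0) \<le> R1" unfolding Fb_def by auto
        have "(kdist k k0 - 1) * h \<le> R1" using point_dist[OF h k0_def[symmetric] y(1)] y(2) by linarith
        then have "kdist k k0 - 1 \<le> R1 / h" using h by (simp add: le_divide_eq)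
        then have "\<bar>real_of_int (k$i - k0$i)\<bar> \<le> R1 / h + 1" for i using kdist_comp[of k i k0] by linarith
        moreover have "real_of_int L = real_of_int \<lceil>R1 / h\<rceil> + 1" unfolding L_def by simp
        moreover have "R1 / h \<le> real_of_int \<lceil>R1 / h\<rceil>" by (rule le_of_int_ceiling)
        moreover have "real_of_int \<bar>k$i - k0$i\<bar> = \<bar>real_of_int (k$i - k0$i)\<bar>" for i by simp
        ultimately have "real_of_int \<bar>k$i - k0$i\<bar> \<le> real_of_int L" for i
          by (metis add_le_cancel_right order_trans)
        then show "k \<in> {k. \<forall>i. \<bar>k$i - k0$i\<bar> \<le> L}" by (simp only: of_int_le_iff) simp
      qed
      have Fb_fin: "finite Fb" by (rule finite_subset[OF Fb_sub finite_int_box])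
      have sub: "space ?P - good \<subseteq> (\<Union>k\<in>Fb. Ev k) \<union> N"
      proof
        fix X assume X: "X \<in> space ?P - good"
        then have Xs: "X \<in> space ?P" and "\<not> (\<forall>xh \<in> mode_hunting_outputs h n X. infnorm (xh - x0) \<le> A * h)"
          unfolding good_def by auto
        then obtain xh where xh: "xh \<in> mode_hunting_outputs h n X" "infnorm (xh - x0) > A * h"
          by (auto simp: not_le)
        then obtain i where i: "i < n" "xh = bin_corner h (bin_index h (X i))"
          "\<forall>j<n. bin_count h n X (bin_index h (X j)) \<le> bin_count h n X (bin_index h (X i))"
          unfolding mode_hunting_outputs_def by auto
        show "X \<in> (\<Union>k\<in>Fb. Ev k) \<union> N"
        proof (cases "X \<in> Eout")
          case True then show ?thesis using N by auto
        next
          case False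
          then have Q: "\<forall>j\<in>{..<n}. infnorm (X j - x0) \<le> R1" using Xs unfolding Eout_def by auto
          define k where "k = bin_index h (X i)"
          have "infnorm (xh - x0) \<le> (kdist k k0 + 1) * h"
            using corner_dist[OF h k0_def[symmetric]] i(2) unfolding k_def by simp
          then have "A * h < (kdist k k0 + 1) * h" using xh by linarith
          then have "A < kdist k k0 + 1" using h by simp
          then have kF: "k \<in> Fb" unfolding Fb_def using Q i(1) k_def by auto
          have bc: "bin_count h n X k' = card {j\<in>{..<n}. X j \<in> Bk k'}" for k'
            unfolding bin_count_def Bk_def by simp
          have "card {j\<in>{..<n}. X j \<in> Bk k0} \<le> card {j\<in>{..<n}. X j \<in> Bk k}"
          proof (cases "\<exists>j<n. bin_index h (X j) = k0")
            case True
            then obtain j where j: "j < n" "bin_index h (X j) = k0" by auto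
            have "bin_count h n X (bin_index h (X j)) \<le> bin_count h n X (bin_index h (X i))"
              using i(3) j(1) by blast
            then have "bin_count h n X k0 \<le> bin_count h n X k" unfolding k_def j(2) .
            then show ?thesis unfolding bc .
          next
            case False
            then have e: "{j\<in>{..<n}. X j \<in> Bk k0} = {}" unfolding Bk_def by auto
            show ?thesis unfolding e by simp
          qed
          then have "X \<in> Ev k" unfolding Ev_def using Xs by simp
          then show ?thesis using kF by auto
        qed
      qed
      have bound: "measure ?P (Ev k) \<le> exp (- \<gamma> * t * kdist k k0 powr (2 * \<beta>))" if kF: "k \<in> Fb" for k
      proof -
        define kd where "kd = kdist k k0"
        have kdA: "kd > A - 1" using kF unfolding Fb_def kd_def by auto
        obtain y where y: "bin_index h y = k" "infnorm (y - x0) \<le> R1" using kF unfolding Fb_def by auto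
        have kdM: "kd \<ge> M0" using kdA AM0 by linarith
        have kd2: "kd \<ge> 2" using kdM M0 by linarith
        have kdR: "kd - 1 > R1 / h0" using kdA AR by linarith
        have pd: "(kd - 1) * h \<le> R1"
          using point_dist[OF h k0_def[symmetric] y(1)] y(2) unfolding kd_def by linarith
        have R1lt: "R1 < (kd - 1) * h0" using kdR params(3) by (simp add: divide_less_eq)
        have hh0: "h \<le> h0"
        proof (rule ccontr)
          assume "\<not> h \<le> h0"
          then have "(kd - 1) * h0 \<le> (kd - 1) * h" using kd2 by (intro mult_left_mono) auto
          then show False using pd R1lt by linarith
        qed
        have kne: "k \<noteq> k0"
        proof
          assume "k = k0"
          then have "kd = 0" unfolding kd_def kdist_def by (simp add: infnorm_eq_0 vec_eq_iff)
          then show False using kd2 by simp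
        qed
        have disj: "Bk k \<inter> Bk k0 = {}" unfolding Bk_def using kne by auto
        define q where "q = measure \<mu> (Bk k0)"
        define p where "p = measure \<mu> (Bk k)"
        define H where "H = h ^ CARD('d)"
        define hb where "hb = h powr \<beta>"
        define kb where "kb = kd powr \<beta>"
        have H: "H > 0" unfolding H_def using h by simp
        have hb: "hb > 0" unfolding hb_def using h by simp
        have kb: "kb > 0" unfolding kb_def using kd2 by simp
        have f00: "f0 \<ge> 0" using f0pos by simp
        have qU: "q \<le> f0 * H"
          unfolding q_def H_def \<mu>_def Bk_def by (rule bin_upper[OF h f_meas f00 fle])
        have qL: "q \<ge> (f0 - C0 * hb) * H"
          unfolding q_def H_def \<mu>_def Bk_def
        proof (rule bin_lower[OF h f_meas])
          show "emeasure (density lborel (\<lambda>x. ennreal (f x))) {x. bin_index h x = k0} < \<infinity>"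
            using Mu.emeasure_finite[of "Bk k0"] unfolding \<mu>_def Bk_def by (simp add: less_top)
          fix x :: "real^'d" assume x: "bin_index h x = k0"
          have "\<bar>(x - x0) $ i\<bar> \<le> h" for i
            using bin_index_bounds[OF h x, of i] bin_index_bounds[OF h k0_def[symmetric], of i] by simp
          then have xi: "infnorm (x - x0) \<le> h" unfolding infnorm_le_iff by blast
          then have "f0 - C0 * infnorm (x - x0) powr \<beta> \<le> f x" using near[of x] hh0 unfolding f0_def by simp
          moreover have "infnorm (x - x0) powr \<beta> \<le> hb"
            unfolding hb_def using xi params(4) by (intro powr_mono2) (auto intro: infnorm_pos_le)
          ultimately show "f0 - C0 * hb \<le> f x" using params by (smt (verit) mult_left_mono)
        qed
        define u where "u = \<rho> * (kd - 1) * h"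
        have u0: "u \<ge> 0" unfolding u_def using \<rho> kd2 h by simp
        have uh0: "u \<le> h0"
        proof -
          have "u = h0 * ((kd - 1) * h / R1)" unfolding u_def \<rho>_def by simp
          also have "\<dots> \<le> h0 * 1" using pd R1pos params(3) by (intro mult_left_mono) auto
          finally show ?thesis by simp
        qed
        have fbin: "f x \<le> f0 - c0 * u powr \<beta>" if x: "bin_index h x = k" for x
        proof -
          define s where "s = infnorm (x - x0)"
          have "(kd - 1) * h \<le> s" using point_dist[OF h k0_def[symmetric] x] unfolding s_def kd_def .
          moreover have "u \<le> (kd - 1) * h" unfolding u_def using \<rho> kd2 h
            by (simp add: mult_le_cancel_right1 mult.assoc)
          ultimately have us: "u \<le> s" by linarith
          show ?thesis
          proof (cases "s \<le> h0")
            case True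
            then have "f x \<le> f0 - c0 * s powr \<beta>" using near[of x] unfolding s_def f0_def by simp
            moreover have "u powr \<beta> \<le> s powr \<beta>" using us u0 params(4) by (intro powr_mono2) auto
            ultimately show ?thesis using params by (smt (verit) mult_left_mono)
          next
            case False
            then have "f x \<le> f0 - c0 * h0 powr \<beta>" using far[of x] unfolding s_def f0_def by simp
            moreover have "u powr \<beta> \<le> h0 powr \<beta>" using uh0 u0 params(4) by (intro powr_mono2) auto
            ultimately show ?thesis using params by (smt (verit) mult_left_mono)
          qed
        qed
        have cnn: "f0 - c0 * u powr \<beta> \<ge> 0" using fbin[OF y(1)] f_nonneg[of y] by linarith
        have pU: "p \<le> (f0 - c0 * u powr \<beta>) * H"
          unfolding p_def H_def \<mu>_def Bk_def by (rule bin_upper[OF h f_meas cnn fbin])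
        have upow: "u powr \<beta> = \<rho> powr \<beta> * (kd - 1) powr \<beta> * hb"
          unfolding u_def hb_def using \<rho> kd2 h by (simp add: powr_mult)
        have km: "(kd - 1) powr \<beta> \<ge> kb / 2 powr \<beta>"
        proof -
          have "kd / 2 \<le> kd - 1" using kd2 by simp
          then have "(kd / 2) powr \<beta> \<le> (kd - 1) powr \<beta>" using kd2 params(4) by (intro powr_mono2) auto
          then show ?thesis unfolding kb_def using kd2 by (simp add: powr_divide)
        qed
        have M0u: "c0 * \<rho> powr \<beta> * (kd - 1) powr \<beta> \<ge> 2 * C0" by (rule M0b[OF kdM])
        define Z where "Z = c0 * \<rho> powr \<beta> * (kd - 1) powr \<beta>"
        have Zk: "Z / 2 \<ge> \<kappa> * kb"
        proof -
          have "c0 * \<rho> powr \<beta> * (kb / 2 powr \<beta>) \<le> Z" unfolding Z_def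
            using km params \<rho> by (intro mult_left_mono) auto
          then show ?thesis unfolding \<kappa>_def by (simp add: field_simps)
        qed
        define D where "D = \<kappa> * kb * hb * H"
        have D: "D > 0" unfolding D_def using \<kappa> kb hb H by simp
        have qp: "q - p \<ge> D"
        proof -
          have "q - p \<ge> (f0 - C0 * hb) * H - (f0 - c0 * u powr \<beta>) * H" using qL pU by linarith
          also have "(f0 - C0 * hb) * H - (f0 - c0 * u powr \<beta>) * H = H * hb * (Z - C0)"
            unfolding upow Z_def by (simp add: algebra_simps)
          also have "H * hb * (Z - C0) \<ge> H * hb * (Z / 2)"
            using M0u H hb unfolding Z_def[symmetric] by (intro mult_left_mono) auto
          also have "H * hb * (Z / 2) \<ge> H * hb * (\<kappa> * kb)"
            using Zk H hb by (intro mult_left_mono) auto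
          finally show ?thesis unfolding D_def by (simp add: algebra_simps)
        qed
        have pq: "p < q" using qp D by linarith
        have q0: "q > 0" using pq p_def measure_nonneg[of \<mu> "Bk k"] by linarith
        have "measure ?P (Ev k) \<le> exp (- real n * (q - p)^2 / (8 * q))"
          unfolding Ev_def q_def p_def
          by (rule pair_count_bound[OF P\<mu> Bk_sets Bk_sets disj]) (use pq in \<open>simp add: p_def q_def\<close>)
        also have "\<dots> \<le> exp (- \<gamma> * t * kdist k k0 powr (2 * \<beta>))"
        proof -
          have tt: "t = real n * H * hb * hb"
          proof -
            have "h powr (real CARD('d) + 2 * \<beta>) = h powr (real CARD('d)) * (h powr \<beta> * h powr \<beta>)"
              by (simp add: powr_add[symmetric])
            also have "h powr (real CARD('d)) = H" unfolding H_def using h by (simp add: powr_realpow)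
            finally show ?thesis unfolding t_def hb_def by simp
          qed
          have kk: "kdist k k0 powr (2 * \<beta>) = kb * kb"
            unfolding kb_def kd_def[symmetric] by (simp add: powr_add[symmetric])
          have "D^2 \<le> (q - p)^2" using qp D by (intro power_mono) auto
          then have "D^2 / (8 * (f0 * H)) \<le> (q - p)^2 / (8 * q)"
            using q0 qU by (intro frac_le) auto
          moreover have "D^2 / (8 * (f0 * H)) = \<gamma> * H * hb * hb * (kb * kb)"
            unfolding D_def \<gamma>_def using H f0pos by (simp add: field_simps power2_eq_square)
          ultimately have "\<gamma> * H * hb * hb * (kb * kb) \<le> (q - p)^2 / (8 * q)" by simp
          then have "real n * (\<gamma> * H * hb * hb * (kb * kb)) \<le> real n * ((q - p)^2 / (8 * q))"
            by (intro mult_left_mono) auto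
          then have "- real n * (q - p)^2 / (8 * q) \<le> - \<gamma> * t * kdist k k0 powr (2 * \<beta>)"
            unfolding tt kk by (simp add: algebra_simps)
          then show ?thesis by simp
        qed
        finally show ?thesis .
      qed
      have sumb: "(\<Sum>k\<in>Fb. exp (- \<gamma> * t * kdist k k0 powr (2 * \<beta>))) \<le> S2 * exp (- \<gamma> * t / 2)"
      proof -
        have pt: "exp (- \<gamma> * t * kdist k k0 powr (2 * \<beta>)) \<le> exp (- \<gamma> * t / 2) * exp (- (\<gamma> / 2) * kdist k k0 powr (2 * \<beta>))"
          if "k \<in> Fb" for k
        proof -
          have "kdist k k0 > A - 1" using that unfolding Fb_def by auto
          then have "kdist k k0 \<ge> 1" using A2 by linarith
          then have K1: "kdist k k0 powr (2 * \<beta>) \<ge> 1" using params(4) by (intro ge_one_powr_ge_zero) auto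
          define K where "K = kdist k k0 powr (2 * \<beta>)"
          have K: "K \<ge> 1" using K1 unfolding K_def .
          have "(t - 1) * (K - 1) \<ge> 0" using t1 K by simp
          then have "t * K \<ge> t / 2 + K / 2" using t1 K by (simp add: algebra_simps)
          then have "\<gamma> * (t * K) \<ge> \<gamma> * (t / 2 + K / 2)" using \<gamma> by (intro mult_left_mono) auto
          then have "- \<gamma> * t * K \<le> - \<gamma> * t / 2 + - (\<gamma> / 2) * K" by (simp add: algebra_simps)
          then have "exp (- \<gamma> * t * K) \<le> exp (- \<gamma> * t / 2 + - (\<gamma> / 2) * K)" by simp
          then show ?thesis unfolding K_def exp_add .
        qed
        have "(\<Sum>k\<in>Fb. exp (- \<gamma> * t * kdist k k0 powr (2 * \<beta>)))
            \<le> (\<Sum>k\<in>Fb. exp (- \<gamma> * t / 2) * exp (- (\<gamma> / 2) * kdist k k0 powr (2 * \<beta>)))"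
          by (intro sum_mono pt)
        also have "\<dots> = exp (- \<gamma> * t / 2) * (\<Sum>k\<in>Fb. exp (- (\<gamma> / 2) * kdist k k0 powr (2 * \<beta>)))"
          by (simp add: sum_distrib_left)
        also have "\<dots> \<le> exp (- \<gamma> * t / 2) * S2"
        proof (intro mult_left_mono)
          show "(\<Sum>k\<in>Fb. exp (- (\<gamma> / 2) * kdist k k0 powr (2 * \<beta>))) \<le> S2"
            unfolding S2_def using lattice_sum[OF Fb_fin, of "\<gamma> / 2" "2 * \<beta>" k0] \<gamma> params(4) by simp
        qed simp
        finally show ?thesis by (simp add: mult.commute)
      qed
      have "measure ?P (space ?P - good) \<le> measure ?P ((\<Union>k\<in>Fb. Ev k) \<union> N)"
        using Fb_fin Ev_sets N(2)
        by (intro PP.finite_measure_mono[OF sub] sets.Un sets.finite_UN) auto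
      also have "\<dots> = measure ?P (\<Union>k\<in>Fb. Ev k)"
        using Fb_fin Ev_sets N(2) by (intro measure_Un_null_set sets.finite_UN) auto
      also have "\<dots> \<le> (\<Sum>k\<in>Fb. measure ?P (Ev k))"
        using Fb_fin Ev_sets by (intro PP.finite_measure_subadditive_finite) auto
      also have "\<dots> \<le> (\<Sum>k\<in>Fb. exp (- \<gamma> * t * kdist k k0 powr (2 * \<beta>)))"
        by (intro sum_mono bound)
      also have "\<dots> \<le> S2 * exp (- \<gamma> * t / 2)" by (rule sumb)
      also have "\<dots> \<le> A * exp (- \<gamma> * t / 2)" using AS2 by (intro mult_right_mono) auto
      also have "\<dots> \<le> A * exp (- t / A)"
      proof -
        have "1 / A \<le> \<gamma> / 2" using A\<gamma> \<gamma> Apos by (simp add: field_simps)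
        then have "t * (1 / A) \<le> t * (\<gamma> / 2)" using t0 by (intro mult_left_mono) auto
        then have "- \<gamma> * t / 2 \<le> - t / A" by (simp add: mult.commute)
        then show ?thesis using Apos by simp
      qed
      finally have "measure ?P (space ?P - good) \<le> A * exp (- t / A)" .
      moreover have "measure ?P (space ?P - good) = 1 - measure ?P good"
        by (rule PP.prob_compl[OF good_sets])
      ultimately show ?thesis by linarith
    qed
    then show ?thesis unfolding good_def t_def by simp
  qed
  show ?thesis
    using main Apos unfolding \<mu>_def by blast
qed

end
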